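(* Let $\alpha>1$, $d\in\mathbb N$, $1\ge\gamma_1\ge\dots\ge\gamma_d>0$, $g\in\mathcal A_{\alpha,\boldsymbol\gamma,d}$, $\boldsymbol x_1,\dots,\boldsymbol x_N\in[0,1]^d$, $c_1,\dots,c_N\in\mathbb R$, and $\varepsilon>0$. Then there exist $\delta\in(0,\alpha-1)$ and $\sigma>0$ such that: if for each prime $L$, $\mathcal Z_L$ is a rank-1 lattice point set of size $L$ with $e(H_{\beta,\boldsymbol\gamma,d},\mathcal Z_L)\le C_{\boldsymbol\gamma,d}(\beta,\tau)L^{-\beta+\tau}$ for all $\tau\in(0,\beta-\frac12]$, where $\beta=\alpha-\frac12-\delta$, and $m_L=\lceil(\alpha-\frac12-\sigma)\log_2(L)+\frac{d-1}2\rceil$, then with $K=Q^\alpha_{m_L,\boldsymbol\gamma,d}$ and $\mathcal Z=\mathcal Z_L$, $$\mathrm{err}_1(g,\mathcal C)+\mathrm{err}_2(g,\mathcal C)\lesssim L^{-(\alpha-\frac12)/2+\varepsilon},$$ with an implicit constant independent of $L$.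
   Context: $r_\beta(\gamma,h)=\max(|h|^{2\beta}/\gamma,1)$, $r_\beta(\boldsymbol\gamma,\boldsymbol k)=\prod_jr_\beta(\gamma_j,k_j)$; $\omega_{\boldsymbol k}(\boldsymbol x)=\exp(2\pi i\,\boldsymbol k\cdot\boldsymbol x)$, $\widehat f_{\boldsymbol k}=\int_{[0,1]^d}f\,\overline{\omega_{\boldsymbol k}}$. $\mathcal A_{\alpha,\boldsymbol\gamma,d}=\{f\in L_1([0,1]^d):\sum_{\boldsymbol k}\sqrt{r_\alpha(\boldsymbol\gamma,\boldsymbol k)}|\widehat f_{\boldsymbol k}|<\infty\}$; $H_{\beta,\boldsymbol\gamma,d}=\{f\in L_2:\sum_{\boldsymbol k}r_\beta(\boldsymbol\gamma,\boldsymbol k)|\widehat f_{\boldsymbol k}|^2<\infty\}$ with norm the square root of this sum. $Q^\alpha_{m,\boldsymbol\gamma,d}=\bigcup_{\boldsymbol t\in\mathbb N_0^d,\|\boldsymbol t\|_1=m}\{\boldsymbol k\in\mathbb Z^d:r_\alpha(\gamma_j,k_j)\le2^{t_j}\ \forall j\}$. $\phi_K(\boldsymbol x)=\sum_{\boldsymbol k\in K}\check\phi_{\boldsymbol k}\overline{\omega_{\boldsymbol k}(\boldsymbol x)}$, $\check\phi_{\boldsymbol k}=\frac1N\sum_nc_n\omega_{\boldsymbol k}(\boldsymbol x_n)$; $\mathrm{err}_1(g,\mathcal C)=|\frac1N\sum_nc_ng(\boldsymbol x_n)-\int g\phi_K|$, $\mathrm{err}_2(g,\mathcal C)=|\int g\phi_K-\frac1L\sum_\ell(g\phi_K)(\boldsymbol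 z_\ell)|$, $\mathcal Z=\{\boldsymbol z_\ell\}$. Rank-1 lattice: $\{(\ell\mathfrak g/L)\bmod1\}_{\ell=0}^{L-1}$, $\mathfrak g\in\{1,\dots,L-1\}^d$. $e(H_{\beta,\boldsymbol\gamma,d},\mathcal Z)=\sup_{\|f\|\le1}|\int f-\frac1L\sum_\ell f(\boldsymbol z_\ell)|$. $C_{\boldsymbol\gamma,d}(\beta,\tau)=2^{\beta-\tau}\prod_j[1+2\gamma_j^{1/(2(\beta-\tau))}\zeta(\frac\beta{\beta-\tau})]^{\beta-\tau}$, $\zeta$ Riemann zeta. *)

theory Defs
  imports "HOL-Analysis.Analysis" "HOL-Computational_Algebra.Primes"
begin

text \<open>Dimension d = CARD('d); coordinates indexed by a finite linearly ordered type.
  Points of [0,1]^d are vectors in real^'d, frequencies are in int^'d.\<close>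

definition rzeta :: "real \<Rightarrow> real" where
  "rzeta s = (\<Sum>n. 1 / (real (Suc n)) powr s)"

definition r1 :: "real \<Rightarrow> real \<Rightarrow> int \<Rightarrow> real" where
  "r1 \<beta> \<gamma> h = max (\<bar>real_of_int h\<bar> powr (2 * \<beta>) / \<gamma>) 1"

definition rw :: "real \<Rightarrow> ('d::finite \<Rightarrow> real) \<Rightarrow> int^'d \<Rightarrow> real" where
  "rw \<beta> \<gamma> k = (\<Prod>j\<in>UNIV. r1 \<beta> (\<gamma> j) (k $ j))"

definition omega :: "int^'d::finite \<Rightarrow> real^'d \<Rightarrow> complex" where
  "omega k x = exp (2 * of_real pi * \<i> * of_real (\<Sum>j\<in>UNIV. of_int (k $ j) * x $ j))"

definition fcoef :: "(real^'d::finite \<Rightarrow> complex) \<Rightarrow> int^'d \<Rightarrow> complex" where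
  "fcoef f k = integral (cbox 0 One) (\<lambda>x. f x * cnj (omega k x))"

text \<open>Point evaluation is that of the representative given by the (absolutely
  convergent) Fourier series.\<close>
definition fourier_rep :: "(real^'d::finite \<Rightarrow> complex) \<Rightarrow> bool" where
  "fourier_rep f \<longleftrightarrow> (\<forall>x\<in>cbox 0 One. f x = infsum (\<lambda>k. fcoef f k * omega k x) UNIV)"

definition in_A :: "real \<Rightarrow> ('d::finite \<Rightarrow> real) \<Rightarrow> (real^'d \<Rightarrow> complex) \<Rightarrow> bool" where
  "in_A \<alpha> \<gamma> f \<longleftrightarrow> f absolutely_integrable_on cbox 0 One \<and>
     (\<lambda>k. sqrt (rw \<alpha> \<gamma> k) * cmod (fcoef f k)) summable_on UNIV"

definition H_unit_ball :: "real \<Rightarrow> ('d::finite \<Rightarrow> real) \<Rightarrow> (real^'d \<Rightarrow> complex) set" where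
  "H_unit_ball \<beta> \<gamma> = {f. f absolutely_integrable_on cbox 0 One \<and>
     (\<lambda>x. (cmod (f x))\<^sup>2) integrable_on cbox 0 One \<and>
     (\<lambda>k. rw \<beta> \<gamma> k * (cmod (fcoef f k))\<^sup>2) summable_on UNIV \<and>
     infsum (\<lambda>k. rw \<beta> \<gamma> k * (cmod (fcoef f k))\<^sup>2) UNIV \<le> 1 \<and>
     fourier_rep f}"

definition wce :: "real \<Rightarrow> ('d::finite \<Rightarrow> real) \<Rightarrow> (nat \<Rightarrow> real^'d) \<Rightarrow> nat \<Rightarrow> ereal" where
  "wce \<beta> \<gamma> z L = (SUP f\<in>H_unit_ball \<beta> \<gamma>.
      ereal (cmod (integral (cbox 0 One) f - (1 / real L) * (\<Sum>l<L. f (z l)))))"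

definition rank1_lattice :: "nat \<Rightarrow> nat^'d::finite \<Rightarrow> nat \<Rightarrow> real^'d" where
  "rank1_lattice L gv l = (\<chi> j. frac (real l * real (gv $ j) / real L))"

definition Cconst :: "('d::finite \<Rightarrow> real) \<Rightarrow> real \<Rightarrow> real \<Rightarrow> real" where
  "Cconst \<gamma> \<beta> \<tau> = 2 powr (\<beta> - \<tau>) *
     (\<Prod>j\<in>UNIV. (1 + 2 * \<gamma> j powr (1 / (2 * (\<beta> - \<tau>))) * rzeta (\<beta> / (\<beta> - \<tau>))) powr (\<beta> - \<tau>))"

definition Qset :: "real \<Rightarrow> ('d::finite \<Rightarrow> real) \<Rightarrow> int \<Rightarrow> (int^'d) set" where
  "Qset \<alpha> \<gamma> m = (\<Union>t\<in>{t :: nat^'d. int (\<Sum>j\<in>UNIV. t $ j) = m}.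
      {k. \<forall>j. r1 \<alpha> (\<gamma> j) (k $ j) \<le> 2 ^ (t $ j)})"

definition phiK :: "(int^'d::finite) set \<Rightarrow> nat \<Rightarrow> (nat \<Rightarrow> real^'d) \<Rightarrow> (nat \<Rightarrow> real) \<Rightarrow> real^'d \<Rightarrow> complex" where
  "phiK K N x c y = (\<Sum>k\<in>K. ((1 / of_nat N) * (\<Sum>n<N. of_real (c n) * omega k (x n))) * cnj (omega k y))"

definition err1 :: "(real^'d::finite \<Rightarrow> complex) \<Rightarrow> nat \<Rightarrow> (nat \<Rightarrow> real^'d) \<Rightarrow> (nat \<Rightarrow> real) \<Rightarrow> (int^'d) set \<Rightarrow> real" where
  "err1 g N x c K = cmod ((1 / of_nat N) * (\<Sum>n<N. of_real (c n) * g (x n))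
      - integral (cbox 0 One) (\<lambda>y. g y * phiK K N x c y))"

definition err2 :: "(real^'d::finite \<Rightarrow> complex) \<Rightarrow> nat \<Rightarrow> (nat \<Rightarrow> real^'d) \<Rightarrow> (nat \<Rightarrow> real) \<Rightarrow> (int^'d) set
    \<Rightarrow> (nat \<Rightarrow> real^'d) \<Rightarrow> nat \<Rightarrow> real" where
  "err2 g N x c K z L = cmod (integral (cbox 0 One) (\<lambda>y. g y * phiK K N x c y)
      - (1 / of_nat L) * (\<Sum>l<L. g (z l) * phiK K N x c (z l)))"

end

theory Submission
  imports Defs
begin


lemma omega_add: "omega (k + h) x = omega k x * omega h x"
  unfolding omega_def by (simp add: distrib_right distrib_left sum.distrib flip: exp_add)

lemma cnj_omega: "cnj (omega k x) = omega (-k) x"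
  unfolding omega_def by (simp add: exp_cnj sum_negf)

lemma norm_omega [simp]: "cmod (omega k x) = 1"
  unfolding omega_def by (simp add: norm_exp_eq_Re)

lemma omega_zero [simp]: "omega 0 x = 1"
  unfolding omega_def by simp

lemma continuous_on_omega: "continuous_on S (omega k)"
  unfolding omega_def by (intro continuous_intros)

lemma r1_ge1: "r1 \<beta> \<gamma> h \<ge> 1"
  unfolding r1_def by simp

lemma r1_neg: "r1 \<beta> \<gamma> (-h) = r1 \<beta> \<gamma> h"
  unfolding r1_def by simp

lemma r1_mono:
  assumes "0 < \<beta>" "\<beta> \<le> \<alpha>" "\<gamma> > 0"
  shows "r1 \<beta> \<gamma> h \<le> r1 \<alpha> \<gamma> h"
proof (cases "h = 0")
  case True then show ?thesis by (simp add: r1_def)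
next
  case False
  then have "\<bar>real_of_int h\<bar> \<ge> 1" by linarith
  then have "\<bar>real_of_int h\<bar> powr (2*\<beta>) \<le> \<bar>real_of_int h\<bar> powr (2*\<alpha>)"
    using assms by (intro powr_mono) auto
  then show ?thesis unfolding r1_def using assms
    by (intro max.mono divide_right_mono) auto
qed

lemma r1_shift:
  assumes "0 < \<beta>" "\<gamma> > 0"
  shows "r1 \<beta> \<gamma> h \<le> 2 powr (2*\<beta>+1) * r1 \<beta> \<gamma> (h+k) * r1 \<beta> \<gamma> k"
proof -
  define u where "u = \<bar>real_of_int (h+k)\<bar>"
  define v where "v = \<bar>real_of_int k\<bar>"
  define R1 where "R1 = r1 \<beta> \<gamma> (h+k)"
  define R2 where "R2 = r1 \<beta> \<gamma> k"
  have R1: "R1 \<ge> 1" "R1 \<ge> u powr (2*\<beta>) / \<gamma>" unfolding R1_def u_def r1_def by auto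
  have R2: "R2 \<ge> 1" "R2 \<ge> v powr (2*\<beta>) / \<gamma>" unfolding R2_def v_def r1_def by auto
  have uv: "u \<ge> 0" "v \<ge> 0" unfolding u_def v_def by auto
  have "\<bar>real_of_int h\<bar> \<le> u + v" unfolding u_def v_def by linarith
  also have "\<dots> \<le> 2 * max u v" by simp
  finally have hle: "\<bar>real_of_int h\<bar> \<le> 2 * max u v" .
  have "\<bar>real_of_int h\<bar> powr (2*\<beta>) \<le> (2 * max u v) powr (2*\<beta>)"
    using hle assms by (intro powr_mono2) auto
  also have "\<dots> = 2 powr (2*\<beta>) * max u v powr (2*\<beta>)"
    using uv by (simp add: powr_mult)
  also have "max u v powr (2*\<beta>) \<le> u powr (2*\<beta>) + v powr (2*\<beta>)"
    by (simp add: max_def)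
  finally have A: "\<bar>real_of_int h\<bar> powr (2*\<beta>) / \<gamma> \<le> 2 powr (2*\<beta>) * (u powr (2*\<beta>) / \<gamma> + v powr (2*\<beta>) / \<gamma>)"
    using assms by (simp add: divide_right_mono add_divide_distrib[symmetric] mult_left_mono)
  have "u powr (2*\<beta>) / \<gamma> + v powr (2*\<beta>) / \<gamma> \<le> R1 + R2" using R1 R2 by linarith
  also have "R1 + R2 \<le> 2 * R1 * R2"
  proof -
    have "(R1-1)*(R2-1) \<ge> 0" using R1 R2 by simp
    moreover have "R1*R2 \<ge> 1*1" using R1 R2 by (intro mult_mono) auto
    ultimately show ?thesis by (simp add: algebra_simps)
  qed
  finally have C: "u powr (2*\<beta>) / \<gamma> + v powr (2*\<beta>) / \<gamma> \<le> 2 * R1 * R2" .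
  have D: "2 powr (2*\<beta>) * (u powr (2*\<beta>) / \<gamma> + v powr (2*\<beta>) / \<gamma>) \<le> 2 powr (2*\<beta>) * (2 * R1 * R2)"
    by (rule mult_left_mono[OF C]) simp
  have E: "2 powr (2*\<beta>+1) * R1 * R2 = 2 powr (2*\<beta>) * (2 * R1 * R2)" by (simp add: powr_add)
  have B: "\<bar>real_of_int h\<bar> powr (2*\<beta>) / \<gamma> \<le> 2 powr (2*\<beta>+1) * R1 * R2"
    using A D unfolding E by linarith
  have "1 \<le> 2 powr (2*\<beta>+1) * R1 * R2"
  proof -
    have "1 \<le> 2 powr (2*\<beta>+1)" using assms by (intro ge_one_powr_ge_zero) auto
    moreover have "1*1 \<le> R1 * R2" using R1 R2 by (intro mult_mono) auto
    ultimately have "1*1 \<le> 2 powr (2*\<beta>+1) * (R1 * R2)" by (intro mult_mono) auto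
    then show ?thesis by (simp add: mult.assoc)
  qed
  then show ?thesis using B unfolding r1_def R1_def R2_def by simp
qed

lemma rw_ge1: "rw \<beta> \<gamma> k \<ge> 1"
  unfolding rw_def by (intro prod_ge_1) (auto simp: r1_ge1)

lemma rw_pos: "rw \<beta> \<gamma> k > 0"
  using rw_ge1[of \<beta> \<gamma> k] by linarith

lemma rw_neg: "rw \<beta> \<gamma> (-k) = rw \<beta> \<gamma> k"
  unfolding rw_def by (simp add: r1_neg)

lemma rw_mono:
  assumes "0 < \<beta>" "\<beta> \<le> \<alpha>" "\<forall>j. \<gamma> j > 0"
  shows "rw \<beta> \<gamma> k \<le> rw \<alpha> \<gamma> k"
  unfolding rw_def using assms
  by (intro prod_mono) (auto simp: r1_mono order.trans[OF zero_le_one r1_ge1])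

lemma rw_shift:
  assumes "0 < \<beta>" "\<forall>j. \<gamma> j > 0"
  shows "rw \<beta> \<gamma> h \<le> (2 powr (2*\<beta>+1)) ^ CARD('d) * rw \<beta> \<gamma> (h+k) * rw \<beta> \<gamma> (k::int^'d::finite)"
proof -
  have "rw \<beta> \<gamma> h \<le> (\<Prod>j\<in>UNIV. 2 powr (2*\<beta>+1) * r1 \<beta> (\<gamma> j) ((h+k)$j) * r1 \<beta> (\<gamma> j) (k$j))"
    unfolding rw_def using assms
    by (intro prod_mono) (auto simp: order.trans[OF zero_le_one r1_ge1] intro: r1_shift)
  also have "\<dots> = (2 powr (2*\<beta>+1)) ^ CARD('d) * rw \<beta> \<gamma> (h+k) * rw \<beta> \<gamma> k"
    unfolding rw_def by (simp add: prod.distrib)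
  finally show ?thesis .
qed



lemma has_sum_finite_sum:
  fixes f :: "'i \<Rightarrow> 'a \<Rightarrow> 'b::topological_comm_monoid_add"
  assumes "finite K" "\<And>k. k \<in> K \<Longrightarrow> (f k has_sum s k) A"
  shows "((\<lambda>x. \<Sum>k\<in>K. f k x) has_sum (\<Sum>k\<in>K. s k)) A"
  using assms
proof (induction K rule: finite_induct)
  case empty then show ?case by (simp add: has_sum_0)
next
  case (insert k K)
  then show ?case by (simp add: has_sum_add)
qed

lemma summable_finite_sum:
  fixes f :: "'i \<Rightarrow> 'a \<Rightarrow> 'b::{topological_comm_monoid_add,t2_space}"
  assumes "finite K" "\<And>k. k \<in> K \<Longrightarrow> f k summable_on A"
  shows "(\<lambda>x. \<Sum>k\<in>K. f k x) summable_on A"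
proof -
  have "\<And>k. k \<in> K \<Longrightarrow> (f k has_sum infsum (f k) A) A" using assms(2) by auto
  then show ?thesis using has_sum_finite_sum[OF assms(1), where f=f and s="\<lambda>k. infsum (f k) A" and A=A]
    unfolding summable_on_def by blast
qed

lemma infsum_finite_sum:
  fixes f :: "'i \<Rightarrow> 'a \<Rightarrow> 'b::{topological_comm_monoid_add,t2_space}"
  assumes "finite K" "\<And>k. k \<in> K \<Longrightarrow> f k summable_on A"
  shows "infsum (\<lambda>x. \<Sum>k\<in>K. f k x) A = (\<Sum>k\<in>K. infsum (f k) A)"
  using has_sum_finite_sum[OF assms(1), where f=f and s="\<lambda>k. infsum (f k) A" and A=A] assms(2)
  by (simp add: infsumI)

lemma summable_shift:
  fixes f :: "'a::ab_group_add \<Rightarrow> 'b::topological_comm_monoid_add"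
  assumes "f summable_on UNIV"
  shows "(\<lambda>h. f (h + k)) summable_on UNIV"
  using summable_on_reindex_bij_betw[of "\<lambda>h. h + k" UNIV UNIV f] assms
  by (simp add: bij_plus_right bij_betw_def)

lemma infsum_shift:
  fixes f :: "'a::ab_group_add \<Rightarrow> 'b::{topological_comm_monoid_add,t2_space}"
  shows "infsum (\<lambda>h. f (h + k)) UNIV = infsum f UNIV"
  using infsum_reindex_bij_betw[of "\<lambda>h. h + k" UNIV UNIV f]
  by (simp add: bij_plus_right bij_betw_def)

lemma prod_integrable:
  fixes g :: "real^'d::finite \<Rightarrow> complex"
  assumes "g absolutely_integrable_on cbox 0 One" "continuous_on (cbox 0 One) p"
  shows "(\<lambda>x. g x * p x) absolutely_integrable_on cbox 0 One"
proof -
  have "(\<lambda>x. p x * g x) absolutely_integrable_on cbox 0 One"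
  proof (rule absolutely_integrable_bounded_measurable_product[OF bilinear_times])
    show "p \<in> borel_measurable (lebesgue_on (cbox 0 One))"
      using assms(2) by (intro continuous_imp_measurable_on_sets_lebesgue) auto
    show "bounded (p ` cbox 0 One)"
      using assms(2) by (intro compact_imp_bounded compact_continuous_image) auto
  qed (use assms in auto)
  then show ?thesis by (simp add: mult.commute)
qed

locale gctx =
  fixes \<alpha> :: real and \<gamma> :: "'d::finite \<Rightarrow> real" and g :: "real^'d \<Rightarrow> complex"
  assumes \<alpha>1: "\<alpha> > 1" and \<gamma>pos: "\<forall>j. \<gamma> j > 0"
    and inA: "in_A \<alpha> \<gamma> g" and frep: "fourier_rep g"
begin

lemma g_absint: "g absolutely_integrable_on cbox 0 One"
  using inA unfolding in_A_def by auto

lemma B_summable: "(\<lambda>k. sqrt (rw \<alpha> \<gamma> k) * cmod (fcoef g k)) summable_on UNIV"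
  using inA unfolding in_A_def by auto

lemma B_nonneg: "sqrt (rw \<alpha> \<gamma> k) * cmod (fcoef g k) \<ge> 0"
  using rw_pos[of \<alpha> \<gamma> k] by simp

lemma a_le_B: "cmod (fcoef g k) \<le> sqrt (rw \<alpha> \<gamma> k) * cmod (fcoef g k)"
proof -
  have "1 \<le> sqrt (rw \<alpha> \<gamma> k)" using rw_ge1 by simp
  then show ?thesis by (metis mult_le_cancel_right1 norm_ge_zero mult.commute mult_right_mono mult_1)
qed

lemma a_abs_summable: "(\<lambda>k. cmod (fcoef g k)) summable_on UNIV"
  by (rule summable_on_comparison_test[OF B_summable]) (auto simp: a_le_B)

lemma a_omega_summable: "(\<lambda>k. fcoef g k * omega k x) summable_on UNIV"
  by (rule abs_summable_summable) (simp add: norm_mult a_abs_summable)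

lemma a_omega_summable_gen: "(\<lambda>k. fcoef g k * c k) summable_on UNIV" if "\<And>k. cmod (c k) \<le> C" for c C
proof (rule abs_summable_summable)
  have "(\<lambda>k. cmod (fcoef g k) * C) summable_on UNIV"
    by (intro summable_on_cmult_left a_abs_summable)
  then show "(\<lambda>k. norm (fcoef g k * c k)) summable_on UNIV"
    by (rule summable_on_comparison_test) (auto simp: norm_mult intro: mult_left_mono that)
qed

lemma g_bound: "x \<in> cbox 0 One \<Longrightarrow> cmod (g x) \<le> infsum (\<lambda>k. cmod (fcoef g k)) UNIV"
proof -
  assume x: "x \<in> cbox 0 One"
  have "g x = infsum (\<lambda>k. fcoef g k * omega k x) UNIV" using frep x unfolding fourier_rep_def by auto
  also have "cmod \<dots> \<le> infsum (\<lambda>k. cmod (fcoef g k * omega k x)) UNIV"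
    by (rule norm_infsum_bound) (simp add: norm_mult a_abs_summable)
  finally show ?thesis by (simp add: norm_mult)
qed

lemma B_shift_summable: "(\<lambda>h. sqrt (rw \<alpha> \<gamma> (h+k)) * cmod (fcoef g (h+k))) summable_on UNIV"
  using summable_shift[OF B_summable] .

end


lemma absint_integrable:
  fixes f :: "'a::euclidean_space \<Rightarrow> 'b::euclidean_space"
  shows "f absolutely_integrable_on S \<Longrightarrow> f integrable_on S"
  by (simp add: absolutely_integrable_on_def)

lemma continuous_on_cnj_omega: "continuous_on S (\<lambda>y. cnj (omega k y))"
  by (intro continuous_intros continuous_on_omega)

lemma continuous_on_phi: "continuous_on S (\<lambda>y. \<Sum>k\<in>K. q k * cnj (omega k y))"
  by (intro continuous_intros continuous_on_omega)

context gctx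
begin

definition Ng where "Ng = infsum (\<lambda>k. sqrt (rw \<alpha> \<gamma> k) * cmod (fcoef g k)) UNIV"

lemma Ng_nonneg: "Ng \<ge> 0"
  unfolding Ng_def by (intro infsum_nonneg B_nonneg)

lemma fcoef_prod:
  assumes "finite K"
  shows "fcoef (\<lambda>y. g y * (\<Sum>k\<in>K. q k * cnj (omega k y))) h = (\<Sum>k\<in>K. q k * fcoef g (h+k))"
proof -
  have pw: "g y * (\<Sum>k\<in>K. q k * cnj (omega k y)) * cnj (omega h y)
        = (\<Sum>k\<in>K. q k * (g y * cnj (omega (h+k) y)))" for y
    by (simp add: sum_distrib_left sum_distrib_right omega_add mult_ac)
  have int: "(\<lambda>y. q k * (g y * cnj (omega (h+k) y))) integrable_on cbox 0 One" for k
  proof -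
    have "(\<lambda>y. g y * cnj (omega (h+k) y)) integrable_on cbox 0 One"
      by (rule absint_integrable[OF prod_integrable[OF g_absint continuous_on_cnj_omega]])
    then show ?thesis by (rule integrable_on_mult_right)
  qed
  show ?thesis
    unfolding fcoef_def pw using assms int
    by (simp add: integral_sum)
qed

lemma integral_prod:
  assumes "finite K"
  shows "integral (cbox 0 One) (\<lambda>y. g y * (\<Sum>k\<in>K. q k * cnj (omega k y))) = (\<Sum>k\<in>K. q k * fcoef g k)"
  using fcoef_prod[OF assms, of q 0] unfolding fcoef_def by simp

lemma shifted_summable: "(\<lambda>h. fcoef g (h+k) * omega h x) summable_on UNIV"
proof -
  have "(\<lambda>h. fcoef g h * omega (h - k) x) summable_on UNIV"
    by (rule a_omega_summable_gen[of _ 1]) simp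
  from summable_shift[OF this, of k] show ?thesis by simp
qed

lemma frep_prod:
  assumes "finite K" "x \<in> cbox 0 One"
  shows "infsum (\<lambda>h. (\<Sum>k\<in>K. q k * fcoef g (h+k)) * omega h x) UNIV
       = g x * (\<Sum>k\<in>K. q k * cnj (omega k x))"
proof -
  have "infsum (\<lambda>h. (\<Sum>k\<in>K. q k * fcoef g (h+k)) * omega h x) UNIV
      = infsum (\<lambda>h. \<Sum>k\<in>K. q k * (fcoef g (h+k) * omega h x)) UNIV"
    by (simp add: sum_distrib_right sum_distrib_left mult_ac)
  also have "\<dots> = (\<Sum>k\<in>K. infsum (\<lambda>h. q k * (fcoef g (h+k) * omega h x)) UNIV)"
    using assms(1) by (intro infsum_finite_sum summable_on_cmult_right shifted_summable)
  also have "\<dots> = (\<Sum>k\<in>K. q k * (g x * cnj (omega k x)))"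
  proof (intro sum.cong refl)
    fix k
    have e: "fcoef g (h+k) * omega h x = (fcoef g (h+k) * omega (h+k) x) * cnj (omega k x)" for h
    proof -
      have "omega h x = omega (h+k) x * omega (-k) x"
        using omega_add[of "h+k" "-k" x] by simp
      then show ?thesis by (simp add: cnj_omega mult_ac)
    qed
    have "infsum (\<lambda>h. fcoef g (h+k) * omega h x) UNIV
        = infsum (\<lambda>h. fcoef g (h+k) * omega (h+k) x) UNIV * cnj (omega k x)"
      unfolding e by (intro infsum_cmult_left summable_shift[where f="\<lambda>h. fcoef g h * omega h x"] a_omega_summable)
    also have "\<dots> = g x * cnj (omega k x)"
      using infsum_shift[of "\<lambda>h. fcoef g h * omega h x" k] frep assms(2)
      unfolding fourier_rep_def by simp
    finally show "infsum (\<lambda>h. q k * (fcoef g (h+k) * omega h x)) UNIV = q k * (g x * cnj (omega k x))"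
      by (subst infsum_cmult_right) (auto intro: shifted_summable)
  qed
  also have "\<dots> = g x * (\<Sum>k\<in>K. q k * cnj (omega k x))"
    by (simp add: sum_distrib_left mult_ac)
  finally show ?thesis .
qed

end


context gctx
begin

lemma young:
  fixes q :: "int^'d \<Rightarrow> complex"
  assumes K: "finite K" and \<beta>: "0 < \<beta>" "\<beta> \<le> \<alpha>"
  defines "cst \<equiv> (2 powr (2*\<beta>+1)) ^ CARD('d)"
  shows "(\<lambda>h. rw \<beta> \<gamma> h * (cmod (\<Sum>k\<in>K. q k * fcoef g (h+k)))\<^sup>2) summable_on UNIV \<and>
         infsum (\<lambda>h. rw \<beta> \<gamma> h * (cmod (\<Sum>k\<in>K. q k * fcoef g (h+k)))\<^sup>2) UNIV
           \<le> cst * Ng\<^sup>2 * (\<Sum>k\<in>K. rw \<beta> \<gamma> k * (cmod (q k))\<^sup>2)"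
proof -
  define Bf where "Bf h = sqrt (rw \<alpha> \<gamma> h) * cmod (fcoef g h)" for h
  define A where "A k = cmod (q k) * sqrt (cst * rw \<beta> \<gamma> k)" for k
  define D where "D h = Ng * (\<Sum>k\<in>K. (A k)\<^sup>2 * Bf (h+k))" for h
  have cst_pos: "cst > 0" unfolding cst_def by simp
  have Bf0: "Bf h \<ge> 0" for h unfolding Bf_def by (rule B_nonneg)
  have A0: "A k \<ge> 0" for k unfolding A_def using cst_pos rw_pos[of \<beta> \<gamma> k] by simp
  have Bsum: "Bf summable_on UNIV" unfolding Bf_def by (rule B_summable)
  have Ng: "Ng = infsum Bf UNIV" unfolding Ng_def Bf_def by simp
  have P1: "sqrt (rw \<beta> \<gamma> h) * cmod (\<Sum>k\<in>K. q k * fcoef g (h+k)) \<le> (\<Sum>k\<in>K. A k * Bf (h+k))" for h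
  proof -
    have "sqrt (rw \<beta> \<gamma> h) * cmod (\<Sum>k\<in>K. q k * fcoef g (h+k))
        \<le> sqrt (rw \<beta> \<gamma> h) * (\<Sum>k\<in>K. cmod (q k) * cmod (fcoef g (h+k)))"
      using rw_pos[of \<beta> \<gamma> h] by (intro mult_left_mono) (auto intro: order.trans[OF norm_sum] simp: norm_mult)
    also have "\<dots> = (\<Sum>k\<in>K. cmod (q k) * (sqrt (rw \<beta> \<gamma> h) * cmod (fcoef g (h+k))))"
      by (simp add: sum_distrib_left mult_ac)
    also have "\<dots> \<le> (\<Sum>k\<in>K. A k * Bf (h+k))"
    proof (intro sum_mono)
      fix k
      have "rw \<beta> \<gamma> h \<le> cst * rw \<beta> \<gamma> (h+k) * rw \<beta> \<gamma> k"
        unfolding cst_def using rw_shift[OF \<beta>(1) \<gamma>pos] by blast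
      also have "\<dots> \<le> cst * rw \<alpha> \<gamma> (h+k) * rw \<beta> \<gamma> k"
        using rw_mono[OF \<beta> \<gamma>pos] cst_pos rw_pos[of \<beta> \<gamma> k]
        by (intro mult_right_mono mult_left_mono) auto
      finally have "sqrt (rw \<beta> \<gamma> h) \<le> sqrt (cst * rw \<beta> \<gamma> k) * sqrt (rw \<alpha> \<gamma> (h+k))"
        by (simp add: real_sqrt_mult[symmetric] mult_ac)
      then have "sqrt (rw \<beta> \<gamma> h) * cmod (fcoef g (h+k)) \<le> sqrt (cst * rw \<beta> \<gamma> k) * Bf (h+k)"
        unfolding Bf_def by (simp add: mult_right_mono mult.assoc[symmetric])
      then show "cmod (q k) * (sqrt (rw \<beta> \<gamma> h) * cmod (fcoef g (h+k))) \<le> A k * Bf (h+k)"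
        unfolding A_def by (simp add: mult_left_mono mult.assoc)
    qed
    finally show ?thesis .
  qed
  have P3: "(\<Sum>k\<in>K. Bf (h+k)) \<le> Ng" for h
  proof -
    have "(\<Sum>k\<in>K. Bf (h+k)) = sum Bf ((\<lambda>k. h+k) ` K)"
      by (simp add: sum.reindex inj_on_def)
    also have "\<dots> \<le> infsum Bf UNIV"
      using K Bsum Bf0 by (intro finite_sum_le_infsum) auto
    finally show ?thesis using Ng by simp
  qed
  have P: "rw \<beta> \<gamma> h * (cmod (\<Sum>k\<in>K. q k * fcoef g (h+k)))\<^sup>2 \<le> D h" for h
  proof -
    have "rw \<beta> \<gamma> h * (cmod (\<Sum>k\<in>K. q k * fcoef g (h+k)))\<^sup>2
        = (sqrt (rw \<beta> \<gamma> h) * cmod (\<Sum>k\<in>K. q k * fcoef g (h+k)))\<^sup>2"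
      using rw_pos[of \<beta> \<gamma> h] by (simp add: power_mult_distrib)
    also have "\<dots> \<le> (\<Sum>k\<in>K. A k * Bf (h+k))\<^sup>2"
      using P1[of h] rw_pos[of \<beta> \<gamma> h] by (intro power_mono) auto
    also have "(\<Sum>k\<in>K. A k * Bf (h+k)) = (\<Sum>k\<in>K. (A k * sqrt (Bf (h+k))) * sqrt (Bf (h+k)))"
      using Bf0 by (intro sum.cong refl) (simp add: mult.assoc)
    also have "(\<dots>)\<^sup>2 \<le> (\<Sum>k\<in>K. (A k * sqrt (Bf (h+k)))\<^sup>2) * (\<Sum>k\<in>K. (sqrt (Bf (h+k)))\<^sup>2)"
      by (rule Cauchy_Schwarz_ineq_sum)
    also have "\<dots> = (\<Sum>k\<in>K. (A k)\<^sup>2 * Bf (h+k)) * (\<Sum>k\<in>K. Bf (h+k))"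
      using Bf0 by (simp add: power_mult_distrib)
    also have "\<dots> \<le> (\<Sum>k\<in>K. (A k)\<^sup>2 * Bf (h+k)) * Ng"
      using P3[of h] Bf0 by (intro mult_left_mono sum_nonneg) auto
    finally show ?thesis unfolding D_def by (simp add: mult.commute)
  qed
  have Dsum: "(D has_sum (Ng * (\<Sum>k\<in>K. (A k)\<^sup>2 * Ng))) UNIV"
  proof -
    have "((\<lambda>h. \<Sum>k\<in>K. (A k)\<^sup>2 * Bf (h+k)) has_sum (\<Sum>k\<in>K. (A k)\<^sup>2 * Ng)) UNIV"
    proof (rule has_sum_finite_sum[OF K])
      fix k
      have "((\<lambda>h. Bf (h+k)) has_sum Ng) UNIV"
        using summable_shift[OF Bsum, of k] infsum_shift[of Bf k] Ng
        by (simp add: summable_iff_has_sum_infsum)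
      then show "((\<lambda>h. (A k)\<^sup>2 * Bf (h+k)) has_sum (A k)\<^sup>2 * Ng) UNIV"
        by (rule has_sum_cmult_right)
    qed
    then show ?thesis unfolding D_def by (rule has_sum_cmult_right)
  qed
  have S: "(\<lambda>h. rw \<beta> \<gamma> h * (cmod (\<Sum>k\<in>K. q k * fcoef g (h+k)))\<^sup>2) summable_on UNIV"
    by (rule summable_on_comparison_test[OF has_sum_imp_summable[OF Dsum]])
      (use P in \<open>auto intro!: mult_nonneg_nonneg less_imp_le[OF rw_pos]\<close>)
  moreover have "infsum (\<lambda>h. rw \<beta> \<gamma> h * (cmod (\<Sum>k\<in>K. q k * fcoef g (h+k)))\<^sup>2) UNIV
           \<le> infsum D UNIV"
    by (rule infsum_mono[OF S has_sum_imp_summable[OF Dsum] P])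
  moreover have "infsum D UNIV = cst * Ng\<^sup>2 * (\<Sum>k\<in>K. rw \<beta> \<gamma> k * (cmod (q k))\<^sup>2)"
  proof -
    have "(A k)\<^sup>2 = cst * rw \<beta> \<gamma> k * (cmod (q k))\<^sup>2" for k
      unfolding A_def using cst_pos rw_pos[of \<beta> \<gamma> k] by (simp add: power_mult_distrib)
    then show ?thesis using infsumI[OF Dsum]
      by (simp add: sum_distrib_left sum_distrib_right power2_eq_square mult_ac)
  qed
  ultimately show ?thesis by simp
qed

end


context gctx
begin

lemma in_ball:
  fixes q :: "int^'d \<Rightarrow> complex"
  assumes K: "finite K" and \<beta>: "0 < \<beta>" "\<beta> \<le> \<alpha>"
    and le1: "(2 powr (2*\<beta>+1)) ^ CARD('d) * Ng\<^sup>2 * (\<Sum>k\<in>K. rw \<beta> \<gamma> k * (cmod (q k))\<^sup>2) \<le> 1"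
  shows "(\<lambda>y. g y * (\<Sum>k\<in>K. q k * cnj (omega k y))) \<in> H_unit_ball \<beta> \<gamma>"
proof -
  define f where "f y = g y * (\<Sum>k\<in>K. q k * cnj (omega k y))" for y
  have fabs: "f absolutely_integrable_on cbox 0 One"
    unfolding f_def by (rule prod_integrable[OF g_absint continuous_on_phi])
  have fb: "cmod (f y) \<le> infsum (\<lambda>k. cmod (fcoef g k)) UNIV * (\<Sum>k\<in>K. cmod (q k))"
    if "y \<in> cbox 0 One" for y
  proof -
    have "cmod (\<Sum>k\<in>K. q k * cnj (omega k y)) \<le> (\<Sum>k\<in>K. cmod (q k))"
      by (rule order.trans[OF norm_sum]) (simp add: norm_mult)
    then show ?thesis unfolding f_def norm_mult
      using g_bound[OF that] by (intro mult_mono) (auto intro: infsum_nonneg)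
  qed
  have nf: "(\<lambda>y. cmod (f y)) absolutely_integrable_on cbox 0 One"
    using absolutely_integrable_norm[OF fabs] by (simp add: o_def)
  have meas: "(\<lambda>y. cmod (f y)) \<in> borel_measurable (lebesgue_on (cbox 0 One))"
    using nf absolutely_integrable_measurable[of "cbox 0 One" "\<lambda>y. cmod (f y)"] by auto
  have bnd: "bounded ((\<lambda>y. cmod (f y)) ` cbox 0 One)"
    unfolding bounded_iff using fb by auto
  have "(\<lambda>y. cmod (f y) * cmod (f y)) absolutely_integrable_on cbox 0 One"
    by (rule absolutely_integrable_bounded_measurable_product[OF bilinear_times meas _ bnd nf]) auto
  then have sq: "(\<lambda>y. (cmod (f y))\<^sup>2) integrable_on cbox 0 One"
    by (simp add: power2_eq_square absint_integrable)
  have fc: "fcoef f h = (\<Sum>k\<in>K. q k * fcoef g (h+k))" for h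
    unfolding f_def by (rule fcoef_prod[OF K])
  have Y: "(\<lambda>h. rw \<beta> \<gamma> h * (cmod (fcoef f h))\<^sup>2) summable_on UNIV \<and>
         infsum (\<lambda>h. rw \<beta> \<gamma> h * (cmod (fcoef f h))\<^sup>2) UNIV \<le> 1"
    using young[OF K \<beta>, of q] le1 unfolding fc by linarith
  have fr: "fourier_rep f"
    unfolding fourier_rep_def fc using frep_prod[OF K] unfolding f_def by simp
  show ?thesis
    using fabs sq Y fr unfolding H_unit_ball_def f_def[symmetric] by auto
qed

end


definition phc :: "nat \<Rightarrow> (nat \<Rightarrow> real^'d::finite) \<Rightarrow> (nat \<Rightarrow> real) \<Rightarrow> int^'d \<Rightarrow> complex" where
  "phc N x c k = (1 / of_nat N) * (\<Sum>n<N. of_real (c n) * omega k (x n))"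

definition Sc :: "nat \<Rightarrow> (nat \<Rightarrow> real) \<Rightarrow> real" where
  "Sc N c = (1 / real N) * (\<Sum>n<N. \<bar>c n\<bar>)"

lemma phiK_eq: "phiK K N x c y = (\<Sum>k\<in>K. phc N x c k * cnj (omega k y))"
  unfolding phiK_def phc_def by simp

lemma Sc_nonneg: "Sc N c \<ge> 0"
  unfolding Sc_def by (simp add: sum_nonneg)

lemma phc_bound: "cmod (phc N x c k) \<le> Sc N c"
proof -
  have "cmod (\<Sum>n<N. of_real (c n) * omega k (x n)) \<le> (\<Sum>n<N. \<bar>c n\<bar>)"
    by (rule order.trans[OF norm_sum]) (simp add: norm_mult)
  moreover have "cmod (1 / complex_of_nat N) = 1 / real N" by (simp add: norm_divide)
  ultimately show ?thesis unfolding phc_def Sc_def norm_mult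
    by (simp add: divide_right_mono)
qed

context gctx
begin

lemma err1_bound:
  assumes K: "finite K" and xs: "\<forall>n<N. x n \<in> cbox 0 One"
    and T: "T > 0" "\<And>k. k \<notin> K \<Longrightarrow> rw \<alpha> \<gamma> k \<ge> T"
  shows "err1 g N x c K \<le> Sc N c * Ng / sqrt T"
proof -
  let ?p = "phc N x c"
  let ?S = "Sc N c"
  have sum1: "(\<lambda>k. fcoef g k * ?p k) summable_on UNIV"
    by (rule a_omega_summable_gen[of _ ?S]) (rule phc_bound)
  have L: "(1 / of_nat N) * (\<Sum>n<N. of_real (c n) * g (x n)) = infsum (\<lambda>k. fcoef g k * ?p k) UNIV"
  proof -
    have "(\<Sum>n<N. of_real (c n) * g (x n)) = (\<Sum>n<N. infsum (\<lambda>k. of_real (c n) * (fcoef g k * omega k (x n))) UNIV)"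
    proof (intro sum.cong refl)
      fix n assume "n \<in> {..<N}"
      then have "g (x n) = infsum (\<lambda>k. fcoef g k * omega k (x n)) UNIV"
        using xs frep unfolding fourier_rep_def by auto
      then show "of_real (c n) * g (x n) = infsum (\<lambda>k. of_real (c n) * (fcoef g k * omega k (x n))) UNIV"
        by (simp add: infsum_cmult_right a_omega_summable)
    qed
    also have "\<dots> = infsum (\<lambda>k. \<Sum>n<N. of_real (c n) * (fcoef g k * omega k (x n))) UNIV"
      by (rule infsum_finite_sum[symmetric]) (auto intro: summable_on_cmult_right a_omega_summable)
    finally have "(1 / of_nat N) * (\<Sum>n<N. of_real (c n) * g (x n))
        = (1 / of_nat N) * infsum (\<lambda>k. \<Sum>n<N. of_real (c n) * (fcoef g k * omega k (x n))) UNIV" by simp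
    also have "\<dots> = infsum (\<lambda>k. (1 / of_nat N) * (\<Sum>n<N. of_real (c n) * (fcoef g k * omega k (x n)))) UNIV"
      by (rule infsum_cmult_right[symmetric]) (intro summable_finite_sum finite_lessThan summable_on_cmult_right a_omega_summable)
    also have "\<dots> = infsum (\<lambda>k. fcoef g k * ?p k) UNIV"
      unfolding phc_def by (intro infsum_cong) (simp add: sum_distrib_left mult_ac)
    finally show ?thesis .
  qed
  have R: "integral (cbox 0 One) (\<lambda>y. g y * phiK K N x c y) = (\<Sum>k\<in>K. fcoef g k * ?p k)"
    unfolding phiK_eq integral_prod[OF K] by (simp add: mult_ac)
  have D: "infsum (\<lambda>k. fcoef g k * ?p k) UNIV - (\<Sum>k\<in>K. fcoef g k * ?p k)
         = infsum (\<lambda>k. fcoef g k * ?p k) (UNIV - K)"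
    using infsum_Diff[OF sum1 summable_on_finite[OF K]] K by simp
  have sumB: "(\<lambda>k. sqrt (rw \<alpha> \<gamma> k) * cmod (fcoef g k) * (?S / sqrt T)) summable_on UNIV"
    by (intro summable_on_cmult_left B_summable)
  have pw: "cmod (fcoef g k * ?p k) \<le> sqrt (rw \<alpha> \<gamma> k) * cmod (fcoef g k) * (?S / sqrt T)"
    if "k \<in> UNIV - K" for k
  proof -
    have "sqrt T \<le> sqrt (rw \<alpha> \<gamma> k)" using T(2)[of k] that by simp
    then have "cmod (fcoef g k) \<le> sqrt (rw \<alpha> \<gamma> k) * cmod (fcoef g k) / sqrt T"
      using T(1) mult_right_mono[OF \<open>sqrt T \<le> sqrt (rw \<alpha> \<gamma> k)\<close> norm_ge_zero[of "fcoef g k"]]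
      by (simp add: field_simps mult.commute)
    then have "cmod (fcoef g k) * cmod (?p k) \<le> (sqrt (rw \<alpha> \<gamma> k) * cmod (fcoef g k) / sqrt T) * ?S"
      using phc_bound B_nonneg[of k] T(1) by (intro mult_mono) auto
    then show ?thesis by (simp add: norm_mult)
  qed
  have sumN: "(\<lambda>k. cmod (fcoef g k * ?p k)) summable_on (UNIV - K)"
    by (rule summable_on_comparison_test[OF summable_on_subset_banach[OF sumB]]) (use pw in auto)
  have "err1 g N x c K = cmod (infsum (\<lambda>k. fcoef g k * ?p k) (UNIV - K))"
    unfolding err1_def L R D ..
  also have "\<dots> \<le> infsum (\<lambda>k. cmod (fcoef g k * ?p k)) (UNIV - K)"
    by (rule norm_infsum_bound) (use sumN in simp)
  also have "\<dots> \<le> infsum (\<lambda>k. sqrt (rw \<alpha> \<gamma> k) * cmod (fcoef g k) * (?S / sqrt T)) UNIV"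
    by (rule infsum_mono_neutral[OF sumN sumB]) (use pw T(1) Sc_nonneg B_nonneg in auto)
  also have "\<dots> = ?S * Ng / sqrt T"
    unfolding Ng_def by (subst infsum_cmult_left) (auto intro: B_summable)
  finally show ?thesis .
qed

lemma err2_bound:
  assumes K: "finite K" and \<beta>: "0 < \<beta>" "\<beta> \<le> \<alpha>"
    and W: "wce \<beta> \<gamma> z L \<le> ereal W"
  shows "err2 g N x c K z L \<le>
     (sqrt ((2 powr (2*\<beta>+1)) ^ CARD('d) * Ng\<^sup>2 * (Sc N c)\<^sup>2 * (\<Sum>k\<in>K. rw \<beta> \<gamma> k)) + 1) * W"
proof -
  define X where "X = (2 powr (2*\<beta>+1)) ^ CARD('d) * Ng\<^sup>2 * (Sc N c)\<^sup>2 * (\<Sum>k\<in>K. rw \<beta> \<gamma> k)"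
  define M where "M = sqrt X + 1"
  have X0: "X \<ge> 0" unfolding X_def
    by (intro mult_nonneg_nonneg sum_nonneg less_imp_le[OF rw_pos]) auto
  have M1: "M \<ge> 1" unfolding M_def using X0 by simp
  have MX: "X \<le> M\<^sup>2"
  proof -
    have "X = (sqrt X)\<^sup>2" using X0 by simp
    also have "\<dots> \<le> M\<^sup>2" unfolding M_def using X0 by (intro power_mono) auto
    finally show ?thesis .
  qed
  define q where "q k = phc N x c k / of_real M" for k
  have le1: "(2 powr (2*\<beta>+1)) ^ CARD('d) * Ng\<^sup>2 * (\<Sum>k\<in>K. rw \<beta> \<gamma> k * (cmod (q k))\<^sup>2) \<le> 1"
  proof -
    have "(\<Sum>k\<in>K. rw \<beta> \<gamma> k * (cmod (q k))\<^sup>2) \<le> (\<Sum>k\<in>K. rw \<beta> \<gamma> k * ((Sc N c)\<^sup>2 / M\<^sup>2))"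
    proof (intro sum_mono mult_left_mono)
      fix k
      have "cmod (q k) = cmod (phc N x c k) / M" unfolding q_def using M1 by (simp add: norm_divide)
      then show "(cmod (q k))\<^sup>2 \<le> (Sc N c)\<^sup>2 / M\<^sup>2"
        using phc_bound[of N x c k] by (simp add: power_divide divide_right_mono power_mono)
      show "0 \<le> rw \<beta> \<gamma> k" using rw_pos[of \<beta> \<gamma> k] by simp
    qed
    then have "(2 powr (2*\<beta>+1)) ^ CARD('d) * Ng\<^sup>2 * (\<Sum>k\<in>K. rw \<beta> \<gamma> k * (cmod (q k))\<^sup>2)
        \<le> (2 powr (2*\<beta>+1)) ^ CARD('d) * Ng\<^sup>2 * (\<Sum>k\<in>K. rw \<beta> \<gamma> k * ((Sc N c)\<^sup>2 / M\<^sup>2))"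
      by (intro mult_left_mono) auto
    also have "\<dots> = X / M\<^sup>2" unfolding X_def sum_distrib_right[symmetric] by (simp add: field_simps)
    also have "\<dots> \<le> 1" using MX M1 by simp
    finally show ?thesis .
  qed
  define f where "f y = g y * (\<Sum>k\<in>K. q k * cnj (omega k y))" for y
  have fin: "f \<in> H_unit_ball \<beta> \<gamma>" unfolding f_def by (rule in_ball[OF K \<beta> le1])
  have feq: "f y = g y * phiK K N x c y / of_real M" for y
    unfolding f_def q_def phiK_eq by (simp add: sum_divide_distrib[symmetric])
  have "ereal (cmod (integral (cbox 0 One) f - (1 / real L) * (\<Sum>l<L. f (z l)))) \<le> wce \<beta> \<gamma> z L"
    unfolding wce_def by (rule SUP_upper[OF fin])
  also have "\<dots> \<le> ereal W" by (rule W)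
  finally have A: "cmod (integral (cbox 0 One) f - (1 / real L) * (\<Sum>l<L. f (z l))) \<le> W" by simp
  have "integral (cbox 0 One) f - (1 / real L) * (\<Sum>l<L. f (z l))
      = (integral (cbox 0 One) (\<lambda>y. g y * phiK K N x c y) - (1 / of_nat L) * (\<Sum>l<L. g (z l) * phiK K N x c (z l))) / of_real M"
    unfolding feq by (simp add: sum_divide_distrib diff_divide_distrib mult.commute)
  then have "err2 g N x c K z L / M \<le> W"
    using A M1 unfolding err2_def by (simp add: norm_divide)
  then have "err2 g N x c K z L \<le> W * M" using M1 by (simp add: divide_le_eq)
  then show ?thesis unfolding M_def X_def by (simp add: mult.commute)
qed

end


lemma vec_box_card:
  assumes "\<And>j. finite (S j)"
  shows "finite {k::'a^'d::finite. \<forall>j. k$j \<in> S j}"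
    and "card {k::'a^'d::finite. \<forall>j. k$j \<in> S j} = (\<Prod>j\<in>UNIV. card (S j))"
proof -
  have eq: "{k::'a^'d. \<forall>j. k$j \<in> S j} = vec_lambda ` (PiE UNIV S)"
  proof (intro set_eqI iffI)
    fix k :: "'a^'d" assume "k \<in> {k. \<forall>j. k$j \<in> S j}"
    then have "vec_nth k \<in> PiE UNIV S" by auto
    then show "k \<in> vec_lambda ` (PiE UNIV S)" by (intro image_eqI[of _ _ "vec_nth k"]) auto
  qed auto
  have inj: "inj_on vec_lambda (PiE UNIV S :: ('d \<Rightarrow> 'a) set)"
    by (auto simp: inj_on_def)
  show "finite {k::'a^'d::finite. \<forall>j. k$j \<in> S j}"
    unfolding eq using assms by (intro finite_imageI finite_PiE) auto
  show "card {k::'a^'d::finite. \<forall>j. k$j \<in> S j} = (\<Prod>j\<in>UNIV. card (S j))"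
    unfolding eq card_image[OF inj] by (simp add: card_PiE)
qed

lemma r1_coord:
  assumes "0 < \<beta>" "\<beta> \<le> \<alpha>" "0 < \<gamma>" "\<gamma> \<le> 1" "r1 \<alpha> \<gamma> h \<le> 2 ^ t"
  shows "\<bar>real_of_int h\<bar> \<le> 2 powr (real t / (2*\<alpha>))"
    and "r1 \<beta> \<gamma> h \<le> 2 powr (real t * \<beta> / \<alpha>) / \<gamma>"
proof -
  have \<alpha>: "\<alpha> > 0" using assms by simp
  have "\<bar>real_of_int h\<bar> powr (2*\<alpha>) / \<gamma> \<le> 2 ^ t" using assms(5) unfolding r1_def by simp
  then have "\<bar>real_of_int h\<bar> powr (2*\<alpha>) \<le> \<gamma> * 2 ^ t" using assms(3) by (simp add: divide_le_eq mult.commute)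
  also have "\<dots> \<le> 2 ^ t" using assms(3,4) by simp
  also have "\<dots> = 2 powr real t" by (simp add: powr_realpow)
  finally have A: "\<bar>real_of_int h\<bar> powr (2*\<alpha>) \<le> 2 powr real t" .
  have "\<bar>real_of_int h\<bar> = (\<bar>real_of_int h\<bar> powr (2*\<alpha>)) powr (1/(2*\<alpha>))"
    using \<alpha> by (simp add: powr_powr)
  also have "\<dots> \<le> (2 powr real t) powr (1/(2*\<alpha>))"
    using A \<alpha> by (intro powr_mono2) auto
  also have "\<dots> = 2 powr (real t / (2*\<alpha>))" by (simp add: powr_powr)
  finally show "\<bar>real_of_int h\<bar> \<le> 2 powr (real t / (2*\<alpha>))" .
  have "\<bar>real_of_int h\<bar> powr (2*\<beta>) = (\<bar>real_of_int h\<bar> powr (2*\<alpha>)) powr (\<beta>/\<alpha>)"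
    using \<alpha> by (simp add: powr_powr)
  also have "\<dots> \<le> (2 powr real t) powr (\<beta>/\<alpha>)"
    using A \<alpha> assms(1) by (intro powr_mono2) auto
  also have "\<dots> = 2 powr (real t * \<beta> / \<alpha>)" by (simp add: powr_powr)
  finally have B: "\<bar>real_of_int h\<bar> powr (2*\<beta>) / \<gamma> \<le> 2 powr (real t * \<beta> / \<alpha>) / \<gamma>"
    using assms(3) by (simp add: divide_right_mono)
  have "1 \<le> 2 powr (real t * \<beta> / \<alpha>)" using assms \<alpha> by (intro ge_one_powr_ge_zero) auto
  also have "\<dots> \<le> 2 powr (real t * \<beta> / \<alpha>) / \<gamma>" using assms(3,4)
    by (simp add: le_divide_eq mult_left_le)
  finally show "r1 \<beta> \<gamma> h \<le> 2 powr (real t * \<beta> / \<alpha>) / \<gamma>" using B unfolding r1_def by simp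
qed



lemma Q_out:
  fixes \<gamma> :: "'d::finite \<Rightarrow> real"
  assumes \<gamma>: "\<forall>j. \<gamma> j > 0" and le: "rw \<alpha> \<gamma> k \<le> 2 powr (real_of_int m - real CARD('d))"
  shows "k \<in> Qset \<alpha> \<gamma> m"
proof -
  define r where "r j = r1 \<alpha> (\<gamma> j) (k$j)" for j
  have r1: "r j \<ge> 1" for j unfolding r_def by (rule r1_ge1)
  have rw: "rw \<alpha> \<gamma> k = (\<Prod>j\<in>UNIV. r j)" unfolding rw_def r_def ..
  have md: "real_of_int m \<ge> real CARD('d)"
  proof (rule ccontr)
    assume "\<not> ?thesis"
    then have "2 powr (real_of_int m - real CARD('d)) < 1" by (intro powr_less_one) auto
    with le rw_ge1[of \<alpha> \<gamma> k] show False by linarith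
  qed
  define s where "s j = nat \<lceil>log 2 (r j)\<rceil>" for j
  have logpos: "log 2 (r j) \<ge> 0" for j using r1[of j] by simp
  have s_lt: "real (s j) < log 2 (r j) + 1" for j
    unfolding s_def using logpos[of j] by linarith
  have r_le: "r j \<le> 2 ^ s j" for j
  proof -
    have "r j = 2 powr (log 2 (r j))" using r1[of j] by simp
    also have "\<dots> \<le> 2 powr real (s j)" unfolding s_def using logpos[of j]
      by (intro powr_mono) linarith+
    also have "\<dots> = 2 ^ s j" by (simp add: powr_realpow)
    finally show ?thesis .
  qed
  have "2 powr (\<Sum>j\<in>UNIV. log 2 (r j)) = (\<Prod>j\<in>UNIV. r j)"
    using r1 by (simp add: powr_sum less_le_trans[OF zero_less_one])
  then have "2 powr (\<Sum>j\<in>UNIV. log 2 (r j)) \<le> 2 powr (real_of_int m - real CARD('d))"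
    using le rw by simp
  then have slog: "(\<Sum>j\<in>UNIV. log 2 (r j)) \<le> real_of_int m - real CARD('d)" by simp
  have "real (\<Sum>j\<in>UNIV. s j) \<le> (\<Sum>j\<in>UNIV. log 2 (r j) + 1)"
    unfolding of_nat_sum using s_lt by (intro sum_mono less_imp_le) auto
  also have "\<dots> = (\<Sum>j\<in>UNIV. log 2 (r j)) + real CARD('d)" by (simp add: sum.distrib)
  finally have ssum: "real (\<Sum>j\<in>UNIV. s j) \<le> real_of_int m" using slog by linarith
  then have ssum': "(\<Sum>j\<in>UNIV. s j) \<le> nat m" by linarith
  define j0 :: 'd where "j0 = undefined"
  define t :: "nat^'d" where "t = (\<chi> j. s j + (if j = j0 then nat m - (\<Sum>j\<in>UNIV. s j) else 0))"
  have tsum: "(\<Sum>j\<in>UNIV. t$j) = nat m"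
    unfolding t_def using ssum' by (simp add: sum.distrib)
  have "int (\<Sum>j\<in>UNIV. t$j) = m" unfolding tsum using md by simp
  moreover have "\<forall>j. r1 \<alpha> (\<gamma> j) (k $ j) \<le> 2 ^ (t $ j)"
  proof
    fix j
    have "r j \<le> 2 ^ s j" by (rule r_le)
    also have "\<dots> \<le> 2 ^ (t$j)" unfolding t_def by (intro power_increasing) auto
    finally show "r1 \<alpha> (\<gamma> j) (k $ j) \<le> 2 ^ (t $ j)" unfolding r_def .
  qed
  ultimately show ?thesis unfolding Qset_def by blast
qed



lemma Q_sum:
  fixes \<gamma> :: "'d::finite \<Rightarrow> real"
  assumes \<gamma>: "\<forall>j. 0 < \<gamma> j \<and> \<gamma> j \<le> 1" and \<beta>: "0 < \<beta>" "2*\<beta>+1 \<le> 2*\<alpha>" and m: "m \<ge> 0"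
  shows "finite (Qset \<alpha> \<gamma> m) \<and> (\<Sum>k\<in>Qset \<alpha> \<gamma> m. rw \<beta> \<gamma> k)
     \<le> (real (nat m) + 1) ^ CARD('d) * 3 ^ CARD('d) * (\<Prod>j\<in>UNIV. 1 / \<gamma> j) * 2 powr (real_of_int m)"
proof -
  have \<alpha>: "\<alpha> > 0" "\<beta> \<le> \<alpha>" using \<beta> by auto
  define T where "T = {t::nat^'d. int (\<Sum>j\<in>UNIV. t$j) = m}"
  define Bx where "Bx t = {k::int^'d. \<forall>j. r1 \<alpha> (\<gamma> j) (k$j) \<le> 2 ^ (t$j)}" for t :: "nat^'d"
  define G where "G = (\<Prod>j\<in>UNIV. 1 / \<gamma> j)"
  have G0: "G \<ge> 0" unfolding G_def using \<gamma> by (simp add: prod_nonneg less_imp_le)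
  have Q: "Qset \<alpha> \<gamma> m = (\<Union>t\<in>T. Bx t)" unfolding Qset_def T_def Bx_def by (rule refl)
  have rt: "real (\<Sum>j\<in>UNIV. t$j) = real_of_int m" if "t \<in> T" for t
  proof -
    have e: "int (\<Sum>j\<in>UNIV. t$j) = m" using that unfolding T_def by simp
    have "real_of_int (int (\<Sum>j\<in>UNIV. t$j)) = real_of_int m" using e by (rule arg_cong)
    then show ?thesis by (simp only: of_int_of_nat_eq)
  qed
  have TB: "T \<subseteq> {t. \<forall>j. t$j \<in> {0..nat m}}"
  proof safe
    fix t j assume "t \<in> T"
    then have "int (\<Sum>j\<in>UNIV. t$j) = m" unfolding T_def by auto
    then have "nat (int (\<Sum>j\<in>UNIV. t$j)) = nat m" by (rule arg_cong)
    then have "(\<Sum>j\<in>UNIV. t$j) = nat m" by (simp only: nat_int)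
    moreover have "t$j \<le> (\<Sum>j\<in>UNIV. t$j)" by (rule member_le_sum) auto
    ultimately show "t$j \<in> {0..nat m}" by simp
  qed
  have Tfin: "finite T" using TB vec_box_card(1)[of "\<lambda>_. {0..nat m}"] finite_subset by blast
  have Tcard: "real (card T) \<le> (real (nat m) + 1) ^ CARD('d)"
  proof -
    have "card T \<le> card {t::nat^'d. \<forall>j. t$j \<in> {0..nat m}}"
      using TB vec_box_card(1)[of "\<lambda>_. {0..nat m}"] by (intro card_mono) auto
    also have "\<dots> = (nat m + 1) ^ CARD('d)"
      using vec_box_card(2)[of "\<lambda>_. {0..nat m}"] by simp
    finally have "real (card T) \<le> real ((nat m + 1) ^ CARD('d))" by (rule of_nat_mono)
    then show ?thesis by (simp add: add.commute)
  qed
  define R where "R t j = \<lfloor>2 powr (real (t$j) / (2*\<alpha>))\<rfloor>" for t :: "nat^'d" and j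
  have Bsub: "Bx t \<subseteq> {k. \<forall>j. k$j \<in> {-R t j..R t j}}" for t
  proof safe
    fix k j assume "k \<in> Bx t"
    then have "r1 \<alpha> (\<gamma> j) (k$j) \<le> 2 ^ (t$j)" unfolding Bx_def by auto
    then have "\<bar>real_of_int (k$j)\<bar> \<le> 2 powr (real (t$j) / (2*\<alpha>))"
      using r1_coord(1)[OF \<beta>(1) \<alpha>(2)] \<gamma> by blast
    then have h1: "real_of_int (k$j) \<le> 2 powr (real (t$j) / (2*\<alpha>))"
      and h2: "real_of_int (- (k$j)) \<le> 2 powr (real (t$j) / (2*\<alpha>))" by auto
    have "k$j \<le> R t j" unfolding R_def using h1 by (simp only: le_floor_iff)
    moreover have "- (k$j) \<le> R t j" unfolding R_def using h2 by (simp only: le_floor_iff)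
    ultimately show "k$j \<in> {-R t j..R t j}" by simp
  qed
  have Bfin: "finite (Bx t)" for t
    using Bsub[of t] vec_box_card(1)[of "\<lambda>j. {-R t j..R t j}"] finite_subset by blast
  have Bcard: "real (card (Bx t)) \<le> 3 ^ CARD('d) * 2 powr (real_of_int m / (2*\<alpha>))" if "t \<in> T" for t
  proof -
    have "card (Bx t) \<le> card {k::int^'d. \<forall>j. k$j \<in> {-R t j..R t j}}"
      using Bsub[of t] vec_box_card(1)[of "\<lambda>j. {-R t j..R t j}"] by (intro card_mono) auto
    also have "\<dots> = (\<Prod>j\<in>UNIV. nat (2 * R t j + 1))"
      using vec_box_card(2)[of "\<lambda>j. {-R t j..R t j}"] by simp
    finally have "real (card (Bx t)) \<le> real (\<Prod>j\<in>UNIV. nat (2 * R t j + 1))" by (rule of_nat_mono)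
    then have "real (card (Bx t)) \<le> (\<Prod>j\<in>UNIV. real (nat (2 * R t j + 1)))" by simp
    also have "\<dots> \<le> (\<Prod>j\<in>UNIV. 3 * 2 powr (real (t$j) / (2*\<alpha>)))"
    proof (intro prod_mono conjI)
      fix j
      have p1: "1 \<le> 2 powr (real (t$j) / (2*\<alpha>))" using \<alpha> by (intro ge_one_powr_ge_zero) auto
      have "real_of_int (R t j) \<le> 2 powr (real (t$j) / (2*\<alpha>))" unfolding R_def by simp
      moreover have "R t j \<ge> 1" unfolding R_def using p1 by (simp add: le_floor_iff)
      ultimately show "real (nat (2 * R t j + 1)) \<le> 3 * 2 powr (real (t$j) / (2*\<alpha>))"
        using p1 by simp
    qed auto
    also have "\<dots> = 3 ^ CARD('d) * 2 powr (\<Sum>j\<in>UNIV. real (t$j) / (2*\<alpha>))"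
      by (simp add: prod.distrib powr_sum)
    also have "(\<Sum>j\<in>UNIV. real (t$j) / (2*\<alpha>)) = real_of_int m / (2*\<alpha>)"
      using rt[OF that] by (simp add: sum_divide_distrib[symmetric])
    finally show ?thesis .
  qed
  have rwb: "rw \<beta> \<gamma> k \<le> G * 2 powr (real_of_int m * \<beta> / \<alpha>)" if "t \<in> T" "k \<in> Bx t" for t k
  proof -
    have "rw \<beta> \<gamma> k \<le> (\<Prod>j\<in>UNIV. 2 powr (real (t$j) * \<beta> / \<alpha>) / \<gamma> j)"
      unfolding rw_def
    proof (intro prod_mono conjI)
      fix j
      show "0 \<le> r1 \<beta> (\<gamma> j) (k$j)" using r1_ge1[of \<beta> "\<gamma> j" "k$j"] by simp
      show "r1 \<beta> (\<gamma> j) (k$j) \<le> 2 powr (real (t$j) * \<beta> / \<alpha>) / \<gamma> j"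
        using that(2) \<gamma> unfolding Bx_def by (intro r1_coord(2)[OF \<beta>(1) \<alpha>(2)]) auto
    qed
    also have "\<dots> = G * 2 powr (\<Sum>j\<in>UNIV. real (t$j) * \<beta> / \<alpha>)"
      unfolding G_def by (simp add: powr_sum prod.distrib divide_inverse prod_inversef mult.commute)
    also have "(\<Sum>j\<in>UNIV. real (t$j) * \<beta> / \<alpha>) = real_of_int m * \<beta> / \<alpha>"
      using rt[OF that(1)] by (simp add: sum_divide_distrib[symmetric] sum_distrib_right[symmetric])
    finally show ?thesis .
  qed
  have Qfin: "finite (Qset \<alpha> \<gamma> m)" unfolding Q using Tfin Bfin by auto
  have cardQ: "real (card (Qset \<alpha> \<gamma> m)) \<le> (real (nat m) + 1) ^ CARD('d) * (3 ^ CARD('d) * 2 powr (real_of_int m / (2*\<alpha>)))"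
  proof -
    have "card (Qset \<alpha> \<gamma> m) \<le> (\<Sum>t\<in>T. card (Bx t))" unfolding Q by (rule card_UN_le[OF Tfin])
    then have "real (card (Qset \<alpha> \<gamma> m)) \<le> real (\<Sum>t\<in>T. card (Bx t))" by (rule of_nat_mono)
    then have "real (card (Qset \<alpha> \<gamma> m)) \<le> (\<Sum>t\<in>T. real (card (Bx t)))" by simp
    also have "\<dots> \<le> real (card T) * (3 ^ CARD('d) * 2 powr (real_of_int m / (2*\<alpha>)))"
      by (rule sum_bounded_above) (rule Bcard)
    also have "\<dots> \<le> (real (nat m) + 1) ^ CARD('d) * (3 ^ CARD('d) * 2 powr (real_of_int m / (2*\<alpha>)))"
      by (intro mult_right_mono Tcard) auto
    finally show ?thesis .
  qed
  have "(\<Sum>k\<in>Qset \<alpha> \<gamma> m. rw \<beta> \<gamma> k) \<le> real (card (Qset \<alpha> \<gamma> m)) * (G * 2 powr (real_of_int m * \<beta> / \<alpha>))"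
    by (rule sum_bounded_above) (use rwb Q in auto)
  also have "\<dots> \<le> (real (nat m) + 1) ^ CARD('d) * (3 ^ CARD('d) * 2 powr (real_of_int m / (2*\<alpha>)))
        * (G * 2 powr (real_of_int m * \<beta> / \<alpha>))"
    using G0 by (intro mult_right_mono cardQ) auto
  also have "\<dots> = (real (nat m) + 1) ^ CARD('d) * 3 ^ CARD('d) * G
        * 2 powr (real_of_int m / (2*\<alpha>) + real_of_int m * \<beta> / \<alpha>)"
    by (simp add: powr_add mult_ac)
  also have "\<dots> \<le> (real (nat m) + 1) ^ CARD('d) * 3 ^ CARD('d) * G * 2 powr (real_of_int m)"
  proof (intro mult_left_mono powr_mono)
    have "real_of_int m / (2*\<alpha>) + real_of_int m * \<beta> / \<alpha> = real_of_int m * ((2*\<beta>+1) / (2*\<alpha>))"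
      using \<alpha> by (simp add: field_simps)
    also have "\<dots> \<le> real_of_int m * 1"
      using \<beta> \<alpha> m by (intro mult_left_mono) (auto simp: divide_le_eq)
    finally show "real_of_int m / (2*\<alpha>) + real_of_int m * \<beta> / \<alpha> \<le> real_of_int m" by simp
  qed (use G0 in auto)
  finally show ?thesis using Qfin unfolding G_def by simp
qed



context gctx
begin

lemma main_bound:
  fixes N :: nat and x :: "nat \<Rightarrow> real^'d" and c :: "nat \<Rightarrow> real"
  assumes \<gamma>1: "\<forall>j. \<gamma> j \<le> 1" and xs: "\<forall>n<N. x n \<in> cbox 0 One"
    and \<delta>: "0 < \<delta>" "\<delta> \<le> \<alpha> - 1"
    and \<sigma>: "0 < \<sigma>" "\<sigma> \<le> \<alpha> - 1/2" "\<sigma> / 2 \<le> \<epsilon>"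
    and \<eta>: "0 < \<eta>" "\<eta> * real CARD('d) / 2 + \<delta> + \<tau> \<le> \<epsilon>"
  shows "\<exists>C. \<forall>L z. real L \<ge> 2 \<longrightarrow>
     wce (\<alpha> - 1/2 - \<delta>) \<gamma> z L \<le> ereal (Cc * real L powr (- (\<alpha> - 1/2 - \<delta>) + \<tau>)) \<longrightarrow>
     (let m = \<lceil>(\<alpha> - 1/2 - \<sigma>) * log 2 (real L) + (real CARD('d) - 1) / 2\<rceil>;
          K = Qset \<alpha> \<gamma> m
      in err1 g N x c K + err2 g N x c K z L \<le> C * real L powr (- (\<alpha> - 1/2) / 2 + \<epsilon>))"
proof -
  define d where "d = real CARD('d)"
  define b where "b = \<alpha> - 1/2"
  define a where "a = \<alpha> - 1/2 - \<sigma>"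
  define \<beta> where "\<beta> = \<alpha> - 1/2 - \<delta>"
  define G where "G = (\<Prod>j\<in>UNIV. 1 / \<gamma> j)"
  define cst where "cst = (2 powr (2*\<beta>+1)) ^ CARD('d)"
  define P0 where "P0 = a / (\<eta> * ln 2) + (d+3)/2"
  define Y where "Y = cst * Ng\<^sup>2 * (Sc N c)\<^sup>2 * 3 ^ CARD('d) * G"
  define C1 where "C1 = Sc N c * Ng * 2 powr ((d+1)/4)"
  define C2 where "C2 = sqrt (Y * P0 ^ CARD('d) * 2 powr ((d+1)/2))"
  have d1: "d \<ge> 1" unfolding d_def by simp
  have a0: "a \<ge> 0" unfolding a_def using \<sigma> by simp
  have \<beta>0: "\<beta> > 0" "2*\<beta>+1 \<le> 2*\<alpha>" "\<beta> \<le> \<alpha>" unfolding \<beta>_def using \<delta> by auto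
  have G0: "G \<ge> 0" unfolding G_def using \<gamma>pos by (simp add: prod_nonneg less_imp_le)
  have Y0: "Y \<ge> 0" unfolding Y_def cst_def using G0 by simp
  have P00: "P0 \<ge> 0" unfolding P0_def using a0 \<eta> d1 by simp
  have C10: "C1 \<ge> 0" unfolding C1_def using Sc_nonneg Ng_nonneg by simp
  have C20: "C2 \<ge> 0" unfolding C2_def using Y0 P00 by simp
  show ?thesis
  proof (intro exI[of _ "C1 + (C2 + 1) * \<bar>Cc\<bar>"] allI impI)
    fix L :: nat and z
    assume L2: "real L \<ge> 2"
      and W: "wce (\<alpha> - 1/2 - \<delta>) \<gamma> z L \<le> ereal (Cc * real L powr (- (\<alpha> - 1/2 - \<delta>) + \<tau>))"
    define lg where "lg = log 2 (real L)"
    define m where "m = \<lceil>a * lg + (d - 1) / 2\<rceil>"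
    define K where "K = Qset \<alpha> \<gamma> m"
    define E where "E = - b / 2 + \<epsilon>"
    have L1: "real L \<ge> 1" using L2 by simp
    have Lpos: "real L > 0" using L2 by simp
    have lg1: "lg \<ge> 1" unfolding lg_def using L2 by simp
    have m_lo: "real_of_int m \<ge> a * lg + (d - 1) / 2" unfolding m_def by linarith
    have m_hi: "real_of_int m \<le> a * lg + (d + 1) / 2"
    proof -
      have "a * lg + (d + 1) / 2 = (a * lg + (d - 1) / 2) + 1" by (simp add: field_simps)
      then show ?thesis unfolding m_def using ceiling_correct[of "a * lg + (d - 1) / 2"] by linarith
    qed
    have alg: "a * lg \<ge> 0" using a0 lg1 by simp
    have d2: "(d - 1) / 2 \<ge> 0" using d1 by simp
    have "real_of_int m \<ge> 0" using m_lo alg d1 by (simp add: field_simps)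
    then have m0: "m \<ge> 0" by simp
    have pw: "2 powr (a * lg) = real L powr a"
    proof -
      have "2 powr (a * lg) = (2 powr lg) powr a" by (simp add: powr_powr mult.commute)
      also have "2 powr lg = real L" unfolding lg_def using Lpos by simp
      finally show ?thesis .
    qed
    have QS: "finite K \<and> (\<Sum>k\<in>K. rw \<beta> \<gamma> k)
        \<le> (real (nat m) + 1) ^ CARD('d) * 3 ^ CARD('d) * G * 2 powr (real_of_int m)"
      unfolding K_def G_def using Q_sum[OF _ \<beta>0(1,2) m0] \<gamma>pos \<gamma>1 by blast
    then have Kfin: "finite K" by simp
    define T where "T = 2 powr (real_of_int m - d)"
    have T0: "T > 0" unfolding T_def by simp
    have Tout: "rw \<alpha> \<gamma> k \<ge> T" if "k \<notin> K" for k
      using Q_out[OF \<gamma>pos, of \<alpha> k m] that unfolding K_def T_def d_def by linarith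
    have e1: "err1 g N x c K \<le> Sc N c * Ng / sqrt T"
      by (rule err1_bound[OF Kfin xs T0 Tout])
    have "sqrt T = 2 powr ((real_of_int m - d) / 2)"
      unfolding T_def by (simp add: powr_half_sqrt_powr[symmetric])
    also have "\<dots> \<ge> 2 powr (a * lg / 2 - (d+1)/4)"
      using m_lo by (intro powr_mono) (simp_all add: field_simps)
    finally have sT: "sqrt T \<ge> 2 powr (a * lg / 2 - (d+1)/4)" .
    have "1 / sqrt T \<le> 1 / 2 powr (a * lg / 2 - (d+1)/4)"
      using sT T0 by (intro divide_left_mono) auto
    also have "\<dots> = 2 powr ((d+1)/4) * real L powr (- a / 2)"
    proof -
      have e1: "2 powr (a * lg / 2 - (d+1)/4) = 2 powr (a * lg / 2) / 2 powr ((d+1)/4)"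
        by (simp add: powr_diff)
      have "2 powr (a * lg / 2) = (2 powr lg) powr (a / 2)" by (simp add: powr_powr mult.commute)
      also have "2 powr lg = real L" unfolding lg_def using Lpos by simp
      finally have e2: "2 powr (a * lg / 2) = real L powr (a / 2)" .
      have e3: "real L powr (- a / 2) = 1 / real L powr (a / 2)"
      proof -
        have "- a / 2 = - (a / 2)" by simp
        then show ?thesis by (simp only: powr_minus_divide)
      qed
      show ?thesis unfolding e1 e2 e3 by simp
    qed
    also have "\<dots> \<le> 2 powr ((d+1)/4) * real L powr E"
    proof -
      have "- a / 2 \<le> E" unfolding E_def a_def b_def using \<sigma> by (simp add: field_simps)
      then show ?thesis using L1 by (intro mult_left_mono powr_mono) auto
    qed
    finally have iT: "1 / sqrt T \<le> 2 powr ((d+1)/4) * real L powr E" .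
    have err1: "err1 g N x c K \<le> C1 * real L powr E"
    proof -
      have "err1 g N x c K \<le> (Sc N c * Ng) * (1 / sqrt T)" using e1 by simp
      also have "\<dots> \<le> (Sc N c * Ng) * (2 powr ((d+1)/4) * real L powr E)"
        using iT Sc_nonneg Ng_nonneg by (intro mult_left_mono) auto
      finally show ?thesis unfolding C1_def by (simp add: mult_ac)
    qed
    have e2: "err2 g N x c K z L \<le>
       (sqrt (cst * Ng\<^sup>2 * (Sc N c)\<^sup>2 * (\<Sum>k\<in>K. rw \<beta> \<gamma> k)) + 1) * (Cc * real L powr (- \<beta> + \<tau>))"
      unfolding cst_def by (rule err2_bound[OF Kfin \<beta>0(1,3)]) (use W \<beta>_def in simp)
    have lnb: "lg \<le> real L powr \<eta> / (\<eta> * ln 2)"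
      unfolding lg_def log_def using ln_powr_bound[OF L1 \<eta>(1)] by (simp add: divide_right_mono field_simps)
    have Le1: "real L powr \<eta> \<ge> 1" using L1 \<eta> by (intro ge_one_powr_ge_zero) auto
    have m1: "real (nat m) + 1 \<le> P0 * real L powr \<eta>"
    proof -
      have "real (nat m) + 1 \<le> a * lg + (d+3)/2" using m_hi m0 by (simp add: field_simps)
      also have "\<dots> \<le> a * (real L powr \<eta> / (\<eta> * ln 2)) + (d+3)/2 * real L powr \<eta>"
      proof (rule add_mono)
        show "a * lg \<le> a * (real L powr \<eta> / (\<eta> * ln 2))" by (rule mult_left_mono[OF lnb a0])
        have "(d+3)/2 * 1 \<le> (d+3)/2 * real L powr \<eta>" by (rule mult_left_mono[OF Le1]) (use d1 in simp)
        then show "(d+3)/2 \<le> (d+3)/2 * real L powr \<eta>" by simp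
      qed
      also have "\<dots> = P0 * real L powr \<eta>" unfolding P0_def by (simp add: field_simps)
      finally show ?thesis .
    qed
    have m1d: "(real (nat m) + 1) ^ CARD('d) \<le> P0 ^ CARD('d) * real L powr (\<eta> * d)"
    proof -
      have "(real (nat m) + 1) ^ CARD('d) \<le> (P0 * real L powr \<eta>) ^ CARD('d)"
        using m1 by (intro power_mono) auto
      also have "\<dots> = P0 ^ CARD('d) * real L powr (\<eta> * d)"
        unfolding d_def using Lpos by (simp add: power_mult_distrib powr_power mult.commute)
      finally show ?thesis .
    qed
    have p2m: "2 powr (real_of_int m) \<le> 2 powr ((d+1)/2) * real L powr a"
    proof -
      have "2 powr (real_of_int m) \<le> 2 powr (a * lg + (d+1)/2)" using m_hi by (intro powr_mono) auto
      also have "\<dots> = 2 powr ((d+1)/2) * real L powr a" by (simp add: powr_add pw mult.commute)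
      finally show ?thesis .
    qed
    have X: "cst * Ng\<^sup>2 * (Sc N c)\<^sup>2 * (\<Sum>k\<in>K. rw \<beta> \<gamma> k)
        \<le> (Y * P0 ^ CARD('d) * 2 powr ((d+1)/2)) * real L powr (\<eta> * d + a)"
    proof -
      have c0: "cst * Ng\<^sup>2 * (Sc N c)\<^sup>2 \<ge> 0" unfolding cst_def by simp
      have "cst * Ng\<^sup>2 * (Sc N c)\<^sup>2 * (\<Sum>k\<in>K. rw \<beta> \<gamma> k)
          \<le> cst * Ng\<^sup>2 * (Sc N c)\<^sup>2 * ((real (nat m) + 1) ^ CARD('d) * 3 ^ CARD('d) * G * 2 powr (real_of_int m))"
        using QS c0 by (intro mult_left_mono) auto
      also have "\<dots> = Y * ((real (nat m) + 1) ^ CARD('d) * 2 powr (real_of_int m))"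
        unfolding Y_def by (simp add: mult_ac)
      also have "\<dots> \<le> Y * ((P0 ^ CARD('d) * real L powr (\<eta> * d)) * (2 powr ((d+1)/2) * real L powr a))"
        using m1d p2m Y0 P00 by (intro mult_left_mono mult_mono) auto
      also have "\<dots> = (Y * P0 ^ CARD('d) * 2 powr ((d+1)/2)) * real L powr (\<eta> * d + a)"
        by (simp add: powr_add mult_ac)
      finally show ?thesis .
    qed
    have sX: "sqrt (cst * Ng\<^sup>2 * (Sc N c)\<^sup>2 * (\<Sum>k\<in>K. rw \<beta> \<gamma> k)) + 1
        \<le> (C2 + 1) * real L powr ((\<eta> * d + a) / 2)"
    proof -
      have "sqrt (cst * Ng\<^sup>2 * (Sc N c)\<^sup>2 * (\<Sum>k\<in>K. rw \<beta> \<gamma> k))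
          \<le> sqrt ((Y * P0 ^ CARD('d) * 2 powr ((d+1)/2)) * real L powr (\<eta> * d + a))"
        using X by (rule real_sqrt_le_mono)
      also have "\<dots> = C2 * real L powr ((\<eta> * d + a) / 2)"
        unfolding C2_def real_sqrt_mult using Lpos by (simp add: powr_half_sqrt_powr)
      finally have "sqrt (cst * Ng\<^sup>2 * (Sc N c)\<^sup>2 * (\<Sum>k\<in>K. rw \<beta> \<gamma> k)) \<le> C2 * real L powr ((\<eta> * d + a) / 2)" .
      moreover have "1 \<le> real L powr ((\<eta> * d + a) / 2)"
        using L1 \<eta> a0 d1 by (intro ge_one_powr_ge_zero) auto
      ultimately show ?thesis by (simp add: distrib_right)
    qed
    have err2: "err2 g N x c K z L \<le> (C2 + 1) * \<bar>Cc\<bar> * real L powr E"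
    proof -
      have "cst * Ng\<^sup>2 * (Sc N c)\<^sup>2 * (\<Sum>k\<in>K. rw \<beta> \<gamma> k) \<ge> 0"
        by (intro mult_nonneg_nonneg sum_nonneg less_imp_le[OF rw_pos]) (auto simp: cst_def)
      then have s0: "sqrt (cst * Ng\<^sup>2 * (Sc N c)\<^sup>2 * (\<Sum>k\<in>K. rw \<beta> \<gamma> k)) + 1 \<ge> 0" by simp
      have "err2 g N x c K z L \<le>
         (sqrt (cst * Ng\<^sup>2 * (Sc N c)\<^sup>2 * (\<Sum>k\<in>K. rw \<beta> \<gamma> k)) + 1) * (\<bar>Cc\<bar> * real L powr (- \<beta> + \<tau>))"
      proof -
        have "Cc * real L powr (- \<beta> + \<tau>) \<le> \<bar>Cc\<bar> * real L powr (- \<beta> + \<tau>)"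
          by (intro mult_right_mono) auto
        then show ?thesis using e2 s0 by (meson mult_left_mono order.trans)
      qed
      also have "\<dots> \<le> ((C2 + 1) * real L powr ((\<eta> * d + a) / 2)) * (\<bar>Cc\<bar> * real L powr (- \<beta> + \<tau>))"
        using sX by (intro mult_right_mono) auto
      also have "\<dots> = (C2 + 1) * \<bar>Cc\<bar> * real L powr ((\<eta> * d + a) / 2 - \<beta> + \<tau>)"
      proof -
        have ex: "(\<eta> * d + a) / 2 - \<beta> + \<tau> = (\<eta> * d + a) / 2 + (- \<beta> + \<tau>)" by simp
        have "real L powr ((\<eta> * d + a) / 2 - \<beta> + \<tau>) = real L powr ((\<eta> * d + a) / 2) * real L powr (- \<beta> + \<tau>)"
          unfolding ex by (rule powr_add)
        then show ?thesis by (simp only: mult_ac)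
      qed
      also have "\<dots> \<le> (C2 + 1) * \<bar>Cc\<bar> * real L powr E"
      proof (intro mult_left_mono powr_mono L1)
        show "(\<eta> * d + a) / 2 - \<beta> + \<tau> \<le> E"
          using \<eta>(2) \<sigma> unfolding E_def a_def b_def \<beta>_def d_def by (simp add: field_simps)
      qed (use C20 in auto)
      finally show ?thesis .
    qed
    have "err1 g N x c K + err2 g N x c K z L \<le> (C1 + (C2 + 1) * \<bar>Cc\<bar>) * real L powr E"
      using err1 err2 by (simp add: distrib_right)
    then show "let m = \<lceil>(\<alpha> - 1/2 - \<sigma>) * log 2 (real L) + (real CARD('d) - 1) / 2\<rceil>;
          K = Qset \<alpha> \<gamma> m
      in err1 g N x c K + err2 g N x c K z L \<le> (C1 + (C2 + 1) * \<bar>Cc\<bar>) * real L powr (- (\<alpha> - 1/2) / 2 + \<epsilon>)"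
      unfolding Let_def K_def m_def a_def lg_def d_def E_def b_def by simp
  qed
qed

end


theorem corollary3p21:
  fixes \<alpha> \<epsilon> :: real and g :: "real^('d::{finite,linorder}) \<Rightarrow> complex"
    and \<gamma> :: "'d::{finite,linorder} \<Rightarrow> real" and N :: nat
    and x :: "nat \<Rightarrow> real^'d::{finite,linorder}" and c :: "nat \<Rightarrow> real"
  assumes "\<alpha> > 1"
    and "\<forall>j. \<gamma> j \<le> 1 \<and> \<gamma> j > 0"
    and "\<forall>i j. i \<le> j \<longrightarrow> \<gamma> j \<le> \<gamma> i"
    and "in_A \<alpha> \<gamma> g" and "fourier_rep g"
    and "\<forall>n<N. x n \<in> cbox 0 One"
    and "\<epsilon> > 0"
  shows "\<exists>\<delta> \<sigma>. 0 < \<delta> \<and> \<delta> < \<alpha> - 1 \<and> \<sigma> > 0 \<and>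
    (\<exists>C. \<forall>gv :: nat \<Rightarrow> nat^('d::{finite,linorder}).
      (\<forall>L. prime L \<longrightarrow> (\<forall>j. 1 \<le> gv L $ j \<and> gv L $ j \<le> L - 1) \<and>
         (\<forall>\<tau>. 0 < \<tau> \<and> \<tau> \<le> (\<alpha> - 1/2 - \<delta>) - 1/2 \<longrightarrow>
            wce (\<alpha> - 1/2 - \<delta>) \<gamma> (rank1_lattice L (gv L)) L
              \<le> ereal (Cconst \<gamma> (\<alpha> - 1/2 - \<delta>) \<tau> * real L powr (- (\<alpha> - 1/2 - \<delta>) + \<tau>))))
      \<longrightarrow> (\<forall>L. prime L \<longrightarrow>
            (let m = \<lceil>(\<alpha> - 1/2 - \<sigma>) * log 2 (real L) + (real CARD('d) - 1) / 2\<rceil>;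
                 K = Qset \<alpha> \<gamma> m
             in err1 g N x c K + err2 g N x c K (rank1_lattice L (gv L)) L
                \<le> C * real L powr (- (\<alpha> - 1/2) / 2 + \<epsilon>))))"
proof -
  interpret gctx \<alpha> \<gamma> g
    using assms(1,2,4,5) by unfold_locales auto
  define \<delta> where "\<delta> = min (\<epsilon>/4) ((\<alpha>-1)/2)"
  define \<sigma> where "\<sigma> = min \<epsilon> ((\<alpha>-1/2)/2)"
  define \<tau> where "\<tau> = min (\<epsilon>/4) ((\<alpha>-1)/2)"
  define \<eta> where "\<eta> = \<epsilon> / (2 * real CARD('d))"
  define Cc where "Cc = Cconst \<gamma> (\<alpha> - 1/2 - \<delta>) \<tau>"
  have \<delta>: "0 < \<delta>" "\<delta> \<le> \<alpha> - 1" "\<delta> < \<alpha> - 1" "\<delta> \<le> \<epsilon>/4" "\<delta> \<le> (\<alpha>-1)/2"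
    unfolding \<delta>_def using assms(1,7) by (auto simp: min_def)
  have \<sigma>: "0 < \<sigma>" "\<sigma> \<le> \<alpha> - 1/2" "\<sigma> / 2 \<le> \<epsilon>"
    unfolding \<sigma>_def using assms(1,7) by (auto simp: min_def)
  have \<tau>: "0 < \<tau>" "\<tau> \<le> \<epsilon>/4" "\<tau> \<le> (\<alpha> - 1/2 - \<delta>) - 1/2"
    unfolding \<tau>_def using assms(1,7) \<delta>(5) by (auto simp: min_def)
  have \<eta>: "0 < \<eta>" "\<eta> * real CARD('d) / 2 + \<delta> + \<tau> \<le> \<epsilon>"
    unfolding \<eta>_def using assms(7) \<delta>(4) \<tau>(2) by auto
  have \<gamma>1: "\<forall>j. \<gamma> j \<le> 1" using assms(2) by auto
  obtain C where C: "\<forall>L z. real L \<ge> 2 \<longrightarrow>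
     wce (\<alpha> - 1/2 - \<delta>) \<gamma> z L \<le> ereal (Cc * real L powr (- (\<alpha> - 1/2 - \<delta>) + \<tau>)) \<longrightarrow>
     (let m = \<lceil>(\<alpha> - 1/2 - \<sigma>) * log 2 (real L) + (real CARD('d) - 1) / 2\<rceil>;
          K = Qset \<alpha> \<gamma> m
      in err1 g N x c K + err2 g N x c K z L \<le> C * real L powr (- (\<alpha> - 1/2) / 2 + \<epsilon>))"
    using main_bound[OF \<gamma>1 assms(6) \<delta>(1,2) \<sigma> \<eta>, of Cc] by blast
  show ?thesis
  proof (rule exI[of _ \<delta>], rule exI[of _ \<sigma>], intro conjI)
    show "0 < \<delta>" "\<delta> < \<alpha> - 1" "\<sigma> > 0" using \<delta> \<sigma> by auto
    show "\<exists>C. \<forall>gv :: nat \<Rightarrow> nat^('d::{finite,linorder}).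
      (\<forall>L. prime L \<longrightarrow> (\<forall>j. 1 \<le> gv L $ j \<and> gv L $ j \<le> L - 1) \<and>
         (\<forall>\<tau>. 0 < \<tau> \<and> \<tau> \<le> (\<alpha> - 1/2 - \<delta>) - 1/2 \<longrightarrow>
            wce (\<alpha> - 1/2 - \<delta>) \<gamma> (rank1_lattice L (gv L)) L
              \<le> ereal (Cconst \<gamma> (\<alpha> - 1/2 - \<delta>) \<tau> * real L powr (- (\<alpha> - 1/2 - \<delta>) + \<tau>))))
      \<longrightarrow> (\<forall>L. prime L \<longrightarrow>
            (let m = \<lceil>(\<alpha> - 1/2 - \<sigma>) * log 2 (real L) + (real CARD('d) - 1) / 2\<rceil>;
                 K = Qset \<alpha> \<gamma> m
             in err1 g N x c K + err2 g N x c K (rank1_lattice L (gv L)) L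
                \<le> C * real L powr (- (\<alpha> - 1/2) / 2 + \<epsilon>)))"
    proof (intro exI[of _ C] allI impI)
      fix gv and L :: nat
      assume H: "\<forall>L. prime L \<longrightarrow> (\<forall>j. 1 \<le> gv L $ j \<and> gv L $ j \<le> L - 1) \<and>
         (\<forall>\<tau>. 0 < \<tau> \<and> \<tau> \<le> (\<alpha> - 1/2 - \<delta>) - 1/2 \<longrightarrow>
            wce (\<alpha> - 1/2 - \<delta>) \<gamma> (rank1_lattice L (gv L)) L
              \<le> ereal (Cconst \<gamma> (\<alpha> - 1/2 - \<delta>) \<tau> * real L powr (- (\<alpha> - 1/2 - \<delta>) + \<tau>)))"
        and p: "prime L"
      have L2: "real L \<ge> 2" using prime_ge_2_nat[OF p] by simp
      have W: "wce (\<alpha> - 1/2 - \<delta>) \<gamma> (rank1_lattice L (gv L)) L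
              \<le> ereal (Cc * real L powr (- (\<alpha> - 1/2 - \<delta>) + \<tau>))"
        using H p \<tau>(1,3) unfolding Cc_def by blast
      show "let m = \<lceil>(\<alpha> - 1/2 - \<sigma>) * log 2 (real L) + (real CARD('d) - 1) / 2\<rceil>;
                 K = Qset \<alpha> \<gamma> m
             in err1 g N x c K + err2 g N x c K (rank1_lattice L (gv L)) L
                \<le> C * real L powr (- (\<alpha> - 1/2) / 2 + \<epsilon>)"
        using C L2 W by blast
    qed
  qed
qed


end
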